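(* Let $\tau^{(k)}=\alpha\partial_t+\beta\partial_x+\sum_{i=1}^k\gamma^{(i)}\partial_{x_i}$ be a telescopic vector field (so $\beta-x_1\alpha\neq0$). Then $$\tau^{(k)}=\alpha\,D_t+(\beta-\alpha x_1)\,\mathbf{X}^{[\lambda,(k)]},$$ where $\mathbf{X}=\partial_x$, $D_t$ is truncated to $\partial_t+x_1\partial_x+\cdots+x_{k+1}\partial_{x_k}$, and $\lambda$ (a function of $(t,x,x_1,x_2)$) is $$\lambda=\frac{\gamma^{(1)}-\alpha x_2}{\beta-\alpha x_1}.$$ If $\alpha=0$, then $\lambda$ does not depend on $x_2$.
   Context: Jet coordinates $(t,x,x_1,x_2,\ldots)$, $x_i=d^ix/dt^i$; $D_t$ the total derivative. A telescopic vector field is $\tau^{(k)}=\alpha(t,x,x_1)\partial_t+\beta(t,x,x_1)\partial_x+\sum_{i=1}^k\gamma^{(i)}\partial_{x_i}$ with $\alpha,\beta,\gamma^{(1)}$ arbitrary smooth functions of $(t,x,x_1)$, $\beta-\alpha x_1\neq 0$, and for $2\le i\le k$: $\gamma^{(i)}=D_t(\gamma^{(i-1)})-D_t(\alpha)x_i+\frac{\gamma^{(1)}+x_1D_t\alpha-D_t\beta}{\beta-x_1\alpha}(\gamma^{(i-1)}-\alpha x_i)$. For a function $\lambda$ depending on finitely many jet variables and $\mathbf{X}=\rho(t,x)\partial_t+\phi^0(t,x)\partial_x$, the (generalized) $\lambda$-prolongation is $\mathbf{X}^{[\lambda,(k)]}=\rho\partial_t+\phi^0\partial_x+\sum_{i=1}^k\phi^{[\lambda,(i)]}\partial_{x_i}$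 with $\phi^{[\lambda,(0)]}=\phi^0$, $\phi^{[\lambda,(i)]}=D_t(\phi^{[\lambda,(i-1)]})-D_t(\rho)x_i+\lambda(\phi^{[\lambda,(i-1)]}-\rho x_i)$. *)

theory Defs
  imports "HOL-Analysis.Analysis"
begin

text \<open>Jet coordinates: a point of the jet space is a pair (t, u) where
  u :: nat \<Rightarrow> real, with u 0 = x and u i = x_i.\<close>

type_synonym jetfun = "real \<Rightarrow> (nat \<Rightarrow> real) \<Rightarrow> real"

coinductive smooth3 :: "(real \<Rightarrow> real \<Rightarrow> real \<Rightarrow> real) \<Rightarrow> bool" where
  "(\<forall>t x y. (\<lambda>(a, b, c). f a b c) differentiable (at (t, x, y))) \<Longrightarrow>
   smooth3 (\<lambda>t x y. deriv (\<lambda>s. f s x y) t) \<Longrightarrow>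
   smooth3 (\<lambda>t x y. deriv (\<lambda>s. f t s y) x) \<Longrightarrow>
   smooth3 (\<lambda>t x y. deriv (\<lambda>s. f t x s) y) \<Longrightarrow>
   smooth3 f"

definition lift3 :: "(real \<Rightarrow> real \<Rightarrow> real \<Rightarrow> real) \<Rightarrow> jetfun" where
  "lift3 f = (\<lambda>t u. f t (u 0) (u 1))"

definition lift2 :: "(real \<Rightarrow> real \<Rightarrow> real) \<Rightarrow> jetfun" where
  "lift2 f = (\<lambda>t u. f t (u 0))"

definition Dt :: "nat \<Rightarrow> jetfun \<Rightarrow> jetfun" where
  "Dt n F = (\<lambda>t u. deriv (\<lambda>s. F s u) t +
      (\<Sum>i\<le>n. u (Suc i) * deriv (\<lambda>y. F t (u(i := y))) (u i)))"

fun tel_gamma :: "nat \<Rightarrow> (real \<Rightarrow> real \<Rightarrow> real \<Rightarrow> real) \<Rightarrow> (real \<Rightarrow> real \<Rightarrow> real \<Rightarrow> real)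
    \<Rightarrow> (real \<Rightarrow> real \<Rightarrow> real \<Rightarrow> real) \<Rightarrow> nat \<Rightarrow> jetfun" where
  "tel_gamma k \<alpha> \<beta> \<gamma>1 0 = (\<lambda>t u. 0)"
| "tel_gamma k \<alpha> \<beta> \<gamma>1 (Suc 0) = lift3 \<gamma>1"
| "tel_gamma k \<alpha> \<beta> \<gamma>1 (Suc (Suc i)) =
     (\<lambda>t u. Dt k (tel_gamma k \<alpha> \<beta> \<gamma>1 (Suc i)) t u - Dt k (lift3 \<alpha>) t u * u (Suc (Suc i))
       + (lift3 \<gamma>1 t u + u 1 * Dt k (lift3 \<alpha>) t u - Dt k (lift3 \<beta>) t u)
           / (lift3 \<beta> t u - u 1 * lift3 \<alpha> t u)
         * (tel_gamma k \<alpha> \<beta> \<gamma>1 (Suc i) t u - lift3 \<alpha> t u * u (Suc (Suc i))))"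

text \<open>Vector fields on J^k are given by their coefficient functions:
  component 0 is the coefficient of \<partial>_t, component (Suc j) that of \<partial>_(x_j)
  (with x_0 = x), for j \<le> k.\<close>

definition telescopic_field :: "nat \<Rightarrow> (real \<Rightarrow> real \<Rightarrow> real \<Rightarrow> real) \<Rightarrow> (real \<Rightarrow> real \<Rightarrow> real \<Rightarrow> real)
    \<Rightarrow> (real \<Rightarrow> real \<Rightarrow> real \<Rightarrow> real) \<Rightarrow> nat \<Rightarrow> jetfun" where
  "telescopic_field k \<alpha> \<beta> \<gamma>1 j =
     (if j = 0 then lift3 \<alpha> else if j = 1 then lift3 \<beta> else tel_gamma k \<alpha> \<beta> \<gamma>1 (j - 1))"

definition Dt_field :: "nat \<Rightarrow> jetfun" where
  "Dt_field j = (if j = 0 then (\<lambda>t u. 1) else (\<lambda>t u. u j))"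

text \<open>The coefficients phi^[lambda,(i)] of the lambda-prolongation of
  X = rho \<partial>_t + phi0 \<partial>_x (total derivative truncated at order n).\<close>

fun prol_phi :: "nat \<Rightarrow> (real \<Rightarrow> real \<Rightarrow> real) \<Rightarrow> (real \<Rightarrow> real \<Rightarrow> real) \<Rightarrow> jetfun \<Rightarrow> nat \<Rightarrow> jetfun" where
  "prol_phi n \<rho> \<phi>0 lam 0 = lift2 \<phi>0"
| "prol_phi n \<rho> \<phi>0 lam (Suc i) =
     (\<lambda>t u. Dt n (prol_phi n \<rho> \<phi>0 lam i) t u - Dt n (lift2 \<rho>) t u * u (Suc i)
        + lam t u * (prol_phi n \<rho> \<phi>0 lam i t u - lift2 \<rho> t u * u (Suc i)))"

definition lambda_prolongation :: "nat \<Rightarrow> (real \<Rightarrow> real \<Rightarrow> real) \<Rightarrow> (real \<Rightarrow> real \<Rightarrow> real)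
    \<Rightarrow> jetfun \<Rightarrow> nat \<Rightarrow> jetfun" where
  "lambda_prolongation n \<rho> \<phi>0 lam j =
     (if j = 0 then lift2 \<rho> else prol_phi n \<rho> \<phi>0 lam (j - 1))"

end

theory Submission
  imports Defs
begin

lemma smooth3_D:
  assumes "smooth3 f"
  shows "(\<forall>t x y. ((\<lambda>s. f s x y) has_real_derivative deriv (\<lambda>s. f s x y) t) (at t))
    \<and> (\<forall>t x y. ((\<lambda>s. f t s y) has_real_derivative deriv (\<lambda>s. f t s y) x) (at x))
    \<and> (\<forall>t x y. ((\<lambda>s. f t x s) has_real_derivative deriv (\<lambda>s. f t x s) y) (at y))
    \<and> smooth3 (\<lambda>t x y. deriv (\<lambda>s. f s x y) t)
    \<and> smooth3 (\<lambda>t x y. deriv (\<lambda>s. f t s y) x)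
    \<and> smooth3 (\<lambda>t x y. deriv (\<lambda>s. f t x s) y)"
proof -
  from assms have d: "\<And>t x y. (\<lambda>(a, b, c). f a b c) differentiable (at (t, x, y))"
    and s: "smooth3 (\<lambda>t x y. deriv (\<lambda>s. f s x y) t)"
      "smooth3 (\<lambda>t x y. deriv (\<lambda>s. f t s y) x)"
      "smooth3 (\<lambda>t x y. deriv (\<lambda>s. f t x s) y)"
    by (auto elim: smooth3.cases)
  have 1: "((\<lambda>s. f s x y) has_real_derivative deriv (\<lambda>s. f s x y) t) (at t)" for t x y
  proof -
    have "(\<lambda>s. (s, x, y)) differentiable (at t)" by (intro derivative_intros)
    from differentiable_chain_at[OF this d[of t x y]]
    show ?thesis unfolding DERIV_deriv_iff_real_differentiable by (simp add: o_def)
  qed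
  have 2: "((\<lambda>s. f t s y) has_real_derivative deriv (\<lambda>s. f t s y) x) (at x)" for t x y
  proof -
    have "(\<lambda>s. (t, s, y)) differentiable (at x)" by (intro derivative_intros)
    from differentiable_chain_at[OF this d[of t x y]]
    show ?thesis unfolding DERIV_deriv_iff_real_differentiable by (simp add: o_def)
  qed
  have 3: "((\<lambda>s. f t x s) has_real_derivative deriv (\<lambda>s. f t x s) y) (at y)" for t x y
  proof -
    have "(\<lambda>s. (t, x, s)) differentiable (at y)" by (intro derivative_intros)
    from differentiable_chain_at[OF this d[of t x y]]
    show ?thesis unfolding DERIV_deriv_iff_real_differentiable by (simp add: o_def)
  qed
  show ?thesis using 1 2 3 s by blast
qed

inductive polyJ :: "jetfun \<Rightarrow> bool" where
  pc: "polyJ (\<lambda>t u. c)"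
| pv: "polyJ (\<lambda>t u. u j)"
| pl: "smooth3 f \<Longrightarrow> polyJ (lift3 f)"
| padd: "polyJ F \<Longrightarrow> polyJ G \<Longrightarrow> polyJ (\<lambda>t u. F t u + G t u)"
| pdiff: "polyJ F \<Longrightarrow> polyJ G \<Longrightarrow> polyJ (\<lambda>t u. F t u - G t u)"
| pmult: "polyJ F \<Longrightarrow> polyJ G \<Longrightarrow> polyJ (\<lambda>t u. F t u * G t u)"
| pinv: "polyJ F \<Longrightarrow> (\<forall>t u. F t u \<noteq> 0) \<Longrightarrow> polyJ (\<lambda>t u. inverse (F t u))"

lemma polyJ_deriv:
  assumes "polyJ F"
  shows "(\<exists>F'. polyJ F' \<and> (\<forall>t u. ((\<lambda>s. F s u) has_real_derivative F' t u) (at t)))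
    \<and> (\<forall>j. \<exists>F'. polyJ F' \<and> (\<forall>t u. ((\<lambda>y. F t (u(j:=y))) has_real_derivative F' t u) (at (u j))))"
  using assms
proof (induction rule: polyJ.induct)
  case (pc c)
  show ?case by (auto intro!: exI[of _ "\<lambda>t u. 0"] polyJ.pc)
next
  case (pv j)
  have "\<exists>F'. polyJ F' \<and> (\<forall>t u. ((\<lambda>y. (u(i:=y)) j) has_real_derivative F' t u) (at (u i)))" for i
  proof (cases "i = j")
    case True
    then show ?thesis by (auto intro!: exI[of _ "\<lambda>t u. 1"] polyJ.pc derivative_eq_intros)
  next
    case False
    then show ?thesis by (auto intro!: exI[of _ "\<lambda>t u. 0"] polyJ.pc derivative_eq_intros)
  qed
  then show ?case by (auto intro!: exI[of _ "\<lambda>t u. 0"] polyJ.pc)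
next
  case (pl f)
  note D = smooth3_D[OF pl]
  have T: "\<exists>F'. polyJ F' \<and> (\<forall>t u. ((\<lambda>s. lift3 f s u) has_real_derivative F' t u) (at t))"
    using D by (auto simp: lift3_def intro!: exI[of _ "lift3 (\<lambda>t x y. deriv (\<lambda>s. f s x y) t)"] polyJ.pl)
  have X: "\<exists>F'. polyJ F' \<and> (\<forall>t u. ((\<lambda>y. lift3 f t (u(j:=y))) has_real_derivative F' t u) (at (u j)))" for j
  proof -
    consider "j = 0" | "j = 1" | "j \<ge> 2" by linarith
    then show ?thesis
    proof cases
      case 1
      then show ?thesis using D
        by (auto simp: lift3_def intro!: exI[of _ "lift3 (\<lambda>t x y. deriv (\<lambda>s. f t s y) x)"] polyJ.pl)
    next
      case 2
      then show ?thesis using D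
        by (auto simp: lift3_def intro!: exI[of _ "lift3 (\<lambda>t x y. deriv (\<lambda>s. f t x s) y)"] polyJ.pl)
    next
      case 3
      then show ?thesis
        by (auto simp: lift3_def intro!: exI[of _ "\<lambda>t u. 0"] polyJ.pc)
    qed
  qed
  show ?case using T X by blast
next
  case (padd F G)
  show ?case
  proof
    from padd.IH obtain F' G' where "polyJ F'" "polyJ G'"
      "\<forall>t u. ((\<lambda>s. F s u) has_real_derivative F' t u) (at t)"
      "\<forall>t u. ((\<lambda>s. G s u) has_real_derivative G' t u) (at t)" by blast
    then show "\<exists>H. polyJ H \<and> (\<forall>t u. ((\<lambda>s. F s u + G s u) has_real_derivative H t u) (at t))"
      by (intro exI[of _ "\<lambda>t u. F' t u + G' t u"]) (auto intro!: polyJ.padd DERIV_add)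
  next
    show "\<forall>j. \<exists>H. polyJ H \<and> (\<forall>t u. ((\<lambda>y. F t (u(j:=y)) + G t (u(j:=y))) has_real_derivative H t u) (at (u j)))"
    proof
      fix j
      from padd.IH obtain F' G' where "polyJ F'" "polyJ G'"
        "\<forall>t u. ((\<lambda>y. F t (u(j:=y))) has_real_derivative F' t u) (at (u j))"
        "\<forall>t u. ((\<lambda>y. G t (u(j:=y))) has_real_derivative G' t u) (at (u j))" by blast
      then show "\<exists>H. polyJ H \<and> (\<forall>t u. ((\<lambda>y. F t (u(j:=y)) + G t (u(j:=y))) has_real_derivative H t u) (at (u j)))"
        by (intro exI[of _ "\<lambda>t u. F' t u + G' t u"]) (auto intro!: polyJ.padd DERIV_add)
    qed
  qed
next
  case (pdiff F G)
  show ?case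
  proof
    from pdiff.IH obtain F' G' where "polyJ F'" "polyJ G'"
      "\<forall>t u. ((\<lambda>s. F s u) has_real_derivative F' t u) (at t)"
      "\<forall>t u. ((\<lambda>s. G s u) has_real_derivative G' t u) (at t)" by blast
    then show "\<exists>H. polyJ H \<and> (\<forall>t u. ((\<lambda>s. F s u - G s u) has_real_derivative H t u) (at t))"
      by (intro exI[of _ "\<lambda>t u. F' t u - G' t u"]) (auto intro!: polyJ.pdiff DERIV_diff)
  next
    show "\<forall>j. \<exists>H. polyJ H \<and> (\<forall>t u. ((\<lambda>y. F t (u(j:=y)) - G t (u(j:=y))) has_real_derivative H t u) (at (u j)))"
    proof
      fix j
      from pdiff.IH obtain F' G' where "polyJ F'" "polyJ G'"
        "\<forall>t u. ((\<lambda>y. F t (u(j:=y))) has_real_derivative F' t u) (at (u j))"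
        "\<forall>t u. ((\<lambda>y. G t (u(j:=y))) has_real_derivative G' t u) (at (u j))" by blast
      then show "\<exists>H. polyJ H \<and> (\<forall>t u. ((\<lambda>y. F t (u(j:=y)) - G t (u(j:=y))) has_real_derivative H t u) (at (u j)))"
        by (intro exI[of _ "\<lambda>t u. F' t u - G' t u"]) (auto intro!: polyJ.pdiff DERIV_diff)
    qed
  qed
next
  case (pmult F G)
  show ?case
  proof
    from pmult.IH obtain F' G' where h: "polyJ F'" "polyJ G'"
      "\<forall>t u. ((\<lambda>s. F s u) has_real_derivative F' t u) (at t)"
      "\<forall>t u. ((\<lambda>s. G s u) has_real_derivative G' t u) (at t)" by blast
    have "polyJ (\<lambda>t u. F' t u * G t u + G' t u * F t u)"
      by (intro polyJ.padd polyJ.pmult h pmult.hyps)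
    moreover have "((\<lambda>s. F s u * G s u) has_real_derivative F' t u * G t u + G' t u * F t u) (at t)" for t u
      by (rule DERIV_mult[OF h(3)[rule_format] h(4)[rule_format]])
    ultimately show "\<exists>H. polyJ H \<and> (\<forall>t u. ((\<lambda>s. F s u * G s u) has_real_derivative H t u) (at t))"
      by blast
  next
    show "\<forall>j. \<exists>H. polyJ H \<and> (\<forall>t u. ((\<lambda>y. F t (u(j:=y)) * G t (u(j:=y))) has_real_derivative H t u) (at (u j)))"
    proof
      fix j
      from pmult.IH obtain F' G' where h: "polyJ F'" "polyJ G'"
        "\<forall>t u. ((\<lambda>y. F t (u(j:=y))) has_real_derivative F' t u) (at (u j))"
        "\<forall>t u. ((\<lambda>y. G t (u(j:=y))) has_real_derivative G' t u) (at (u j))" by blast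
      have "polyJ (\<lambda>t u. F' t u * G t u + G' t u * F t u)"
        by (intro polyJ.padd polyJ.pmult h pmult.hyps)
      moreover have "((\<lambda>y. F t (u(j:=y)) * G t (u(j:=y))) has_real_derivative F' t u * G t u + G' t u * F t u) (at (u j))" for t u
      proof -
        have "((\<lambda>y. F t (u(j:=y)) * G t (u(j:=y))) has_real_derivative F' t u * G t (u(j:=u j)) + G' t u * F t (u(j:=u j))) (at (u j))"
          by (rule DERIV_mult[OF h(3)[rule_format] h(4)[rule_format]])
        then show ?thesis by simp
      qed
      ultimately show "\<exists>H. polyJ H \<and> (\<forall>t u. ((\<lambda>y. F t (u(j:=y)) * G t (u(j:=y))) has_real_derivative H t u) (at (u j)))"
        by blast
    qed
  qed
next
  case (pinv F)
  have P: "polyJ (\<lambda>t u. inverse (F t u))" using pinv.hyps by (rule polyJ.pinv)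
  show ?case
  proof
    from pinv.IH obtain F' where h: "polyJ F'"
      "\<forall>t u. ((\<lambda>s. F s u) has_real_derivative F' t u) (at t)" by blast
    have "polyJ (\<lambda>t u. (- 1) * (F' t u * (inverse (F t u) * inverse (F t u))))"
      by (intro polyJ.pmult polyJ.pc h P)
    moreover have "((\<lambda>s. inverse (F s u)) has_real_derivative (- 1) * (F' t u * (inverse (F t u) * inverse (F t u)))) (at t)" for t u
    proof -
      have "((\<lambda>s. inverse (F s u)) has_real_derivative - (F' t u * inverse (F t u ^ Suc (Suc 0)))) (at t)"
        using pinv.hyps(2) by (intro DERIV_inverse_fun h(2)[rule_format]) auto
      then show ?thesis by (simp add: power2_eq_square)
    qed
    ultimately show "\<exists>H. polyJ H \<and> (\<forall>t u. ((\<lambda>s. inverse (F s u)) has_real_derivative H t u) (at t))"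
      by blast
  next
    show "\<forall>j. \<exists>H. polyJ H \<and> (\<forall>t u. ((\<lambda>y. inverse (F t (u(j:=y)))) has_real_derivative H t u) (at (u j)))"
    proof
      fix j
      from pinv.IH obtain F' where h: "polyJ F'"
        "\<forall>t u. ((\<lambda>y. F t (u(j:=y))) has_real_derivative F' t u) (at (u j))" by blast
      have "polyJ (\<lambda>t u. (- 1) * (F' t u * (inverse (F t u) * inverse (F t u))))"
        by (intro polyJ.pmult polyJ.pc h P)
      moreover have "((\<lambda>y. inverse (F t (u(j:=y)))) has_real_derivative (- 1) * (F' t u * (inverse (F t u) * inverse (F t u)))) (at (u j))" for t u
      proof -
        have "((\<lambda>y. inverse (F t (u(j:=y)))) has_real_derivative - (F' t u * inverse (F t (u(j:=u j)) ^ Suc (Suc 0)))) (at (u j))"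
          using pinv.hyps(2) by (intro DERIV_inverse_fun h(2)[rule_format]) auto
        then show ?thesis by (simp add: power2_eq_square)
      qed
      ultimately show "\<exists>H. polyJ H \<and> (\<forall>t u. ((\<lambda>y. inverse (F t (u(j:=y)))) has_real_derivative H t u) (at (u j)))"
        by blast
    qed
  qed
qed


lemma polyJ_D:
  assumes "polyJ F"
  shows "\<And>t u. ((\<lambda>s. F s u) has_real_derivative deriv (\<lambda>s. F s u) t) (at t)"
    and "\<And>t u j. ((\<lambda>y. F t (u(j:=y))) has_real_derivative deriv (\<lambda>y. F t (u(j:=y))) (u j)) (at (u j))"
    and "polyJ (\<lambda>t u. deriv (\<lambda>s. F s u) t)"
    and "\<And>j. polyJ (\<lambda>t u. deriv (\<lambda>y. F t (u(j:=y))) (u j))"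
proof -
  note D = polyJ_deriv[OF assms]
  from D obtain F' where F': "polyJ F'" "\<forall>t u. ((\<lambda>s. F s u) has_real_derivative F' t u) (at t)" by blast
  have e: "(\<lambda>t u. deriv (\<lambda>s. F s u) t) = F'" using F'(2) by (auto intro!: ext DERIV_imp_deriv)
  show "polyJ (\<lambda>t u. deriv (\<lambda>s. F s u) t)" using e F' by simp
  show "((\<lambda>s. F s u) has_real_derivative deriv (\<lambda>s. F s u) t) (at t)" for t u
    using F'(2) DERIV_imp_deriv by metis
  fix j
  from D obtain G where G: "polyJ G" "\<forall>t u. ((\<lambda>y. F t (u(j:=y))) has_real_derivative G t u) (at (u j))" by blast
  have e2: "(\<lambda>t u. deriv (\<lambda>y. F t (u(j:=y))) (u j)) = G" using G(2) by (auto intro!: ext DERIV_imp_deriv)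
  show "polyJ (\<lambda>t u. deriv (\<lambda>y. F t (u(j:=y))) (u j))" using e2 G by simp
next
  fix t u j
  note D = polyJ_deriv[OF assms]
  from D obtain G where G: "polyJ G" "\<forall>t u. ((\<lambda>y. F t (u(j:=y))) has_real_derivative G t u) (at (u j))" by blast
  show "((\<lambda>y. F t (u(j:=y))) has_real_derivative deriv (\<lambda>y. F t (u(j:=y))) (u j)) (at (u j))"
    using G(2) DERIV_imp_deriv by metis
qed

lemma polyJ_sum: "(\<And>i. polyJ (G i)) \<Longrightarrow> polyJ (\<lambda>t u. \<Sum>i\<le>(n::nat). G i t u)"
proof (induction n)
  case 0
  then show ?case by simp
next
  case (Suc n)
  then show ?case by (simp add: polyJ.padd)
qed

lemma polyJ_Dt: "polyJ F \<Longrightarrow> polyJ (Dt n F)"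
  unfolding Dt_def
  by (intro polyJ.padd polyJ_sum polyJ.pmult polyJ.pv polyJ_D)

lemma Dt_const: "Dt n (\<lambda>t u. c) = (\<lambda>t u. 0)"
  unfolding Dt_def by simp

lemma Dt_var: "Dt n (\<lambda>t u. u j) t u = (if j \<le> n then u (Suc j) else 0)"
proof -
  have d: "deriv (\<lambda>y. (u(i:=y)) j) (u i) = (if i = j then 1 else 0)" for i
    by (cases "i = j") auto
  have "(\<Sum>i\<le>n. u (Suc i) * deriv (\<lambda>y. (u(i:=y)) j) (u i)) = (\<Sum>i\<le>n. if i = j then u (Suc j) else 0)"
    by (rule sum.cong) (auto simp: d)
  also have "\<dots> = (if j \<le> n then u (Suc j) else 0)"
    by (simp add: sum.delta)
  finally show ?thesis unfolding Dt_def by simp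
qed

lemma Dt_add:
  assumes "polyJ F" "polyJ G"
  shows "Dt n (\<lambda>t u. F t u + G t u) t u = Dt n F t u + Dt n G t u"
proof -
  have a: "deriv (\<lambda>s. F s u + G s u) t = deriv (\<lambda>s. F s u) t + deriv (\<lambda>s. G s u) t"
    by (rule DERIV_imp_deriv) (intro DERIV_add polyJ_D(1) assms)
  have b: "deriv (\<lambda>y. F t (u(i:=y)) + G t (u(i:=y))) (u i)
      = deriv (\<lambda>y. F t (u(i:=y))) (u i) + deriv (\<lambda>y. G t (u(i:=y))) (u i)" for i
    by (rule DERIV_imp_deriv) (intro DERIV_add polyJ_D(2) assms)
  show ?thesis unfolding Dt_def a b by (simp add: algebra_simps sum.distrib)
qed

lemma Dt_diff:
  assumes "polyJ F" "polyJ G"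
  shows "Dt n (\<lambda>t u. F t u - G t u) t u = Dt n F t u - Dt n G t u"
proof -
  have a: "deriv (\<lambda>s. F s u - G s u) t = deriv (\<lambda>s. F s u) t - deriv (\<lambda>s. G s u) t"
    by (rule DERIV_imp_deriv) (intro DERIV_diff polyJ_D(1) assms)
  have b: "deriv (\<lambda>y. F t (u(i:=y)) - G t (u(i:=y))) (u i)
      = deriv (\<lambda>y. F t (u(i:=y))) (u i) - deriv (\<lambda>y. G t (u(i:=y))) (u i)" for i
    by (rule DERIV_imp_deriv) (intro DERIV_diff polyJ_D(2) assms)
  show ?thesis unfolding Dt_def a b by (simp add: algebra_simps sum_subtractf)
qed

lemma Dt_mult:
  assumes "polyJ F" "polyJ G"
  shows "Dt n (\<lambda>t u. F t u * G t u) t u = Dt n F t u * G t u + F t u * Dt n G t u"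
proof -
  have a: "deriv (\<lambda>s. F s u * G s u) t = deriv (\<lambda>s. F s u) t * G t u + deriv (\<lambda>s. G s u) t * F t u"
    by (rule DERIV_imp_deriv) (intro DERIV_mult polyJ_D(1) assms)
  have b: "deriv (\<lambda>y. F t (u(i:=y)) * G t (u(i:=y))) (u i)
      = deriv (\<lambda>y. F t (u(i:=y))) (u i) * G t u + deriv (\<lambda>y. G t (u(i:=y))) (u i) * F t u" for i
  proof -
    have "((\<lambda>y. F t (u(i:=y)) * G t (u(i:=y))) has_real_derivative
       deriv (\<lambda>y. F t (u(i:=y))) (u i) * G t (u(i:=u i)) + deriv (\<lambda>y. G t (u(i:=y))) (u i) * F t (u(i:=u i))) (at (u i))"
      by (intro DERIV_mult polyJ_D(2) assms)
    then show ?thesis by (simp add: DERIV_imp_deriv)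
  qed
  show ?thesis unfolding Dt_def a b
    by (simp add: algebra_simps sum.distrib sum_distrib_left sum_distrib_right)
qed


theorem theorem2p4:
  fixes \<alpha> \<beta> \<gamma>1 :: "real \<Rightarrow> real \<Rightarrow> real \<Rightarrow> real" and k :: nat
  assumes "smooth3 \<alpha>" and "smooth3 \<beta>" and "smooth3 \<gamma>1"
    and "\<forall>t x x1. \<beta> t x x1 - \<alpha> t x x1 * x1 \<noteq> 0"
  defines "lam \<equiv> (\<lambda>t u. (\<gamma>1 t (u 0) (u 1) - \<alpha> t (u 0) (u 1) * u 2)
                          / (\<beta> t (u 0) (u 1) - \<alpha> t (u 0) (u 1) * u 1))"
  shows "(\<forall>j \<le> Suc k. \<forall>t u.
            telescopic_field k \<alpha> \<beta> \<gamma>1 j t u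
              = \<alpha> t (u 0) (u 1) * Dt_field j t u
                + (\<beta> t (u 0) (u 1) - \<alpha> t (u 0) (u 1) * u 1)
                  * lambda_prolongation k (\<lambda>t x. 0) (\<lambda>t x. 1) lam j t u)
       \<and> ((\<forall>t x x1. \<alpha> t x x1 = 0) \<longrightarrow> (\<forall>t u y. lam t (u(2 := y)) = lam t u))"
proof -
  define A where "A = lift3 \<alpha>"
  define Bf where "Bf = (\<lambda>t u. lift3 \<beta> t u - u 1 * lift3 \<alpha> t u)"
  define \<phi> where "\<phi> = prol_phi k (\<lambda>t x. 0) (\<lambda>t x. 1) lam"
  have nz: "Bf t u \<noteq> 0" for t u
    using assms(4) by (simp add: Bf_def lift3_def mult.commute)
  have pA: "polyJ A" unfolding A_def by (rule polyJ.pl[OF assms(1)])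
  have pB: "polyJ Bf" unfolding Bf_def
    by (intro polyJ.pdiff polyJ.pmult polyJ.pv polyJ.pl assms)
  have lam_eq: "lam = (\<lambda>t u. (lift3 \<gamma>1 t u - A t u * u 2) * inverse (Bf t u))"
    by (auto intro!: ext simp: lam_def A_def Bf_def lift3_def divide_inverse mult.commute)
  have plam: "polyJ lam" unfolding lam_eq
    by (intro polyJ.pmult polyJ.pdiff polyJ.pv polyJ.pl assms pA polyJ.pinv pB) (use nz in blast)
  have l0: "lift2 (\<lambda>t x. 0) = (\<lambda>t u. 0)" by (simp add: lift2_def)
  have l1: "lift2 (\<lambda>t x. 1) = (\<lambda>t u. 1)" by (simp add: lift2_def)
  have phi0: "\<phi> 0 = (\<lambda>t u. 1)" by (simp add: \<phi>_def l1)
  have phiS: "\<phi> (Suc i) = (\<lambda>t u. Dt k (\<phi> i) t u + lam t u * \<phi> i t u)" for i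
    by (simp add: \<phi>_def l0 Dt_const)
  have pphi: "polyJ (\<phi> i)" for i
  proof (induction i)
    case 0
    then show ?case by (simp add: phi0 polyJ.pc)
  next
    case (Suc i)
    then show ?case unfolding phiS by (intro polyJ.padd polyJ.pmult polyJ_Dt plam)
  qed
  have claim: "1 \<le> m \<longrightarrow> m \<le> k \<longrightarrow> tel_gamma k \<alpha> \<beta> \<gamma>1 m = (\<lambda>t u. A t u * u (Suc m) + Bf t u * \<phi> m t u)" for m
  proof (induction m)
    case 0
    then show ?case by simp
  next
    case (Suc m)
    show ?case
    proof (cases m)
      case 0
      show ?thesis
      proof (intro impI ext)
        fix t u
        have "\<phi> 1 t u = lam t u" by (simp add: phiS phi0 Dt_const)
        then show "tel_gamma k \<alpha> \<beta> \<gamma>1 (Suc m) t u = A t u * u (Suc (Suc m)) + Bf t u * \<phi> (Suc m) t u"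
          using nz[of t u] 0 by (simp add: lam_eq A_def field_simps numeral_2_eq_2)
      qed
    next
      case (Suc i)
      show ?thesis
      proof (intro impI ext)
        fix t u
        assume "Suc m \<le> k"
        then have k2: "Suc (Suc i) \<le> k" "1 \<le> k" using Suc by auto
        have IH: "tel_gamma k \<alpha> \<beta> \<gamma>1 (Suc i) = (\<lambda>t u. A t u * u (Suc (Suc i)) + Bf t u * \<phi> (Suc i) t u)"
          using Suc.IH Suc k2 by simp
        have dB: "Dt k Bf t u = Dt k (lift3 \<beta>) t u - (u 2 * A t u + u 1 * Dt k A t u)"
          unfolding Bf_def using k2
          by (simp add: Dt_diff Dt_mult polyJ.pl polyJ.pmult polyJ.pv assms Dt_var pA[unfolded A_def] A_def numeral_2_eq_2)
        have dT: "Dt k (tel_gamma k \<alpha> \<beta> \<gamma>1 (Suc i)) t u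
           = Dt k A t u * u (Suc (Suc i)) + A t u * u (Suc (Suc (Suc i)))
             + (Dt k Bf t u * \<phi> (Suc i) t u + Bf t u * Dt k (\<phi> (Suc i)) t u)"
          unfolding IH using k2
          by (simp add: Dt_add Dt_mult polyJ.pmult polyJ.pv pA pB pphi Dt_var)
        have lamv: "lam t u = (lift3 \<gamma>1 t u - A t u * u 2) / Bf t u"
          by (simp add: lam_eq divide_inverse)
        have e1: "tel_gamma k \<alpha> \<beta> \<gamma>1 (Suc (Suc i)) t u = Dt k (tel_gamma k \<alpha> \<beta> \<gamma>1 (Suc i)) t u
            - Dt k A t u * u (Suc (Suc i)) + (lift3 \<gamma>1 t u + u 1 * Dt k A t u - Dt k (lift3 \<beta>) t u) / Bf t u
              * (tel_gamma k \<alpha> \<beta> \<gamma>1 (Suc i) t u - A t u * u (Suc (Suc i)))"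
          by (simp add: A_def Bf_def)
        have e2: "\<phi> (Suc (Suc i)) t u = Dt k (\<phi> (Suc i)) t u + lam t u * \<phi> (Suc i) t u"
          by (simp only: phiS[of "Suc i"])
        have e3: "tel_gamma k \<alpha> \<beta> \<gamma>1 (Suc i) t u = A t u * u (Suc (Suc i)) + Bf t u * \<phi> (Suc i) t u"
          by (simp add: IH)
        show "tel_gamma k \<alpha> \<beta> \<gamma>1 (Suc m) t u = A t u * u (Suc (Suc m)) + Bf t u * \<phi> (Suc m) t u"
          unfolding Suc e1 e2 dT e3 dB lamv
          using nz[of t u]
          by (simp add: field_simps)
      qed
    qed
  qed
  show ?thesis
  proof (intro conjI allI impI)
    fix j t u
    assume j: "j \<le> Suc k"
    consider "j = 0" | "j = 1" | "j \<ge> 2" by linarith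
    then show "telescopic_field k \<alpha> \<beta> \<gamma>1 j t u
              = \<alpha> t (u 0) (u 1) * Dt_field j t u
                + (\<beta> t (u 0) (u 1) - \<alpha> t (u 0) (u 1) * u 1)
                  * lambda_prolongation k (\<lambda>t x. 0) (\<lambda>t x. 1) lam j t u"
    proof cases
      case 1
      then show ?thesis by (simp add: telescopic_field_def Dt_field_def lambda_prolongation_def lift3_def lift2_def)
    next
      case 2
      then show ?thesis by (simp add: telescopic_field_def Dt_field_def lambda_prolongation_def lift3_def lift2_def)
    next
      case 3
      then have c: "tel_gamma k \<alpha> \<beta> \<gamma>1 (j - 1) t u = A t u * u (Suc (j - 1)) + Bf t u * \<phi> (j - 1) t u"
        using claim[of "j - 1"] j by simp
      show ?thesis using 3 c
        by (simp add: telescopic_field_def Dt_field_def lambda_prolongation_def A_def Bf_def lift3_def \<phi>_def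
            mult.commute)
    qed
  next
    fix t u y
    assume "\<forall>t x x1. \<alpha> t x x1 = 0"
    then show "lam t (u(2 := y)) = lam t u" by (simp add: lam_def)
  qed
qed

end
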